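(* Let $\Psi=(\Psi_1,\Psi_2)$ and $\Phi=(\Phi_1,\Phi_2)$ be smooth complex-valued functions of $(z,\tau)$, $z\in U\subset\mathbb{C}$ open, $\tau$ in an interval, and let $x^1,x^2,x^3,x^4$ be smooth real-valued functions of $(z,\tau)$ satisfying, for every $\tau$, $$\partial_z x^1=\tfrac{i}{2}(\bar\Phi_2\bar\Psi_2+\Phi_1\Psi_1),\quad \partial_z x^2=\tfrac12(\bar\Phi_2\bar\Psi_2-\Phi_1\Psi_1),$$ $$\partial_z x^3=\tfrac12(\bar\Phi_2\Psi_1+\Phi_1\bar\Psi_2),\quad \partial_z x^4=\tfrac{i}{2}(\bar\Phi_2\Psi_1-\Phi_1\bar\Psi_2).$$ Suppose that $$\partial_\tau\Psi_1=(x^3-ix^4)\Psi_1-i(x^1-ix^2)\bar\Psi_2,\qquad \partial_\tau\Psi_2=(x^3-ix^4)\Psi_2+i(x^1-ix^2)\bar\Psi_1,$$ $$\partial_\tau\Phi_1=(x^3+ix^4)\Phi_1-i(x^1-ix^2)\bar\Phi_2,\qquad \partial_\tau\Phi_2=(x^3+ix^4)\Phi_2+i(x^1-ix^2)\bar\Phi_1.$$ Then for $k=1,\dots,4$, $$\partial_\tau\partial_z x^k=\partial_z\big(V^k(x)\big),$$ where $V=(V^1,V^2,V^3,V^4)$ is the vector field on $\mathbb{R}^4$ $$V^1=2x^1x^3,\quad V^2=2x^2x^3,\quad V^3=(x^3)^2-(x^1)^2-(x^2)^2-(x^4)^2,\quad V^4=2x^4x^3,$$ which is the generator of a one-parameter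 group of conformal transformations of $\mathbb{R}^4\cup\{\infty\}$ (conjugate to an inversion). Consequently, with a suitable choice of integration constants, $\partial_\tau x^k=V^k(x)$, i.e. the flow on $(\Psi,\Phi)$ induces this infinitesimal conformal transformation of the surface $z\mapsto(x^1,\dots,x^4)$.
   Context: $\partial_z=\frac12(\partial_x-i\partial_y)$ for $z=x+iy$; bars denote complex conjugation. The displayed formulas for $\partial_z x^k$ are the Weierstrass representation of a surface in $\mathbb{R}^4$ in terms of spinors $\Psi,\Phi$. *)

theory Defs
  imports "HOL-Analysis.Analysis"
begin

definition dirderiv :: "'a::real_normed_vector \<Rightarrow> ('a \<Rightarrow> 'b::real_normed_vector) \<Rightarrow> 'a \<Rightarrow> 'b" where
  "dirderiv v f p = vector_derivative (\<lambda>s. f (p + s *\<^sub>R v)) (at 0)"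

fun iter_pd :: "'a::real_normed_vector list \<Rightarrow> ('a \<Rightarrow> 'b::real_normed_vector) \<Rightarrow> 'a \<Rightarrow> 'b" where
  "iter_pd [] f = f"
| "iter_pd (v # vs) f = dirderiv v (iter_pd vs f)"

definition smooth_on :: "'a::euclidean_space set \<Rightarrow> ('a \<Rightarrow> 'b::real_normed_vector) \<Rightarrow> bool" where
  "smooth_on S f \<longleftrightarrow>
     (\<forall>vs. set vs \<subseteq> Basis \<longrightarrow>
        continuous_on S (iter_pd vs f) \<and>
        (\<forall>v\<in>Basis. \<forall>p\<in>S. (\<lambda>s. iter_pd vs f (p + s *\<^sub>R v)) differentiable (at 0)))"

text \<open>Partial derivatives on complex x real, with z = x + i y.\<close>

definition d_tau :: "(complex \<times> real \<Rightarrow> 'b::real_normed_vector) \<Rightarrow> complex \<times> real \<Rightarrow> 'b" where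
  "d_tau f = dirderiv (0, 1) f"

definition d_z :: "(complex \<times> real \<Rightarrow> complex) \<Rightarrow> complex \<times> real \<Rightarrow> complex" where
  "d_z f p = (dirderiv (1, 0) f p - \<i> * dirderiv (\<i>, 0) f p) / 2"

definition V1 :: "real \<Rightarrow> real \<Rightarrow> real \<Rightarrow> real \<Rightarrow> real" where
  "V1 a b c d = 2 * a * c"
definition V2 :: "real \<Rightarrow> real \<Rightarrow> real \<Rightarrow> real \<Rightarrow> real" where
  "V2 a b c d = 2 * b * c"
definition V3 :: "real \<Rightarrow> real \<Rightarrow> real \<Rightarrow> real \<Rightarrow> real" where
  "V3 a b c d = c^2 - a^2 - b^2 - d^2"
definition V4 :: "real \<Rightarrow> real \<Rightarrow> real \<Rightarrow> real \<Rightarrow> real" where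
  "V4 a b c d = 2 * d * c"

end

theory Submission
  imports Defs "HOL-Analysis.Analysis"
begin


lemma basis_facts: "((1::complex),(0::real)) \<in> Basis" "(\<i>,(0::real)) \<in> Basis" "((0::complex),(1::real)) \<in> Basis"
  by (auto simp: Basis_prod_def Basis_complex_def)

lemma hd_smooth:
  assumes "smooth_on S f" "v \<in> Basis" "p \<in> S"
  shows "((\<lambda>s. f (p + s *\<^sub>R v)) has_vector_derivative dirderiv v f p) (at 0)"
proof -
  have "(\<lambda>s. iter_pd [] f (p + s *\<^sub>R v)) differentiable (at 0)"
    using assms unfolding smooth_on_def by (metis empty_subsetI list.set(1))
  then show ?thesis unfolding dirderiv_def by (simp add: vector_derivative_works)
qed

lemma hd_smooth_real:
  fixes f :: "'a::euclidean_space \<Rightarrow> real"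
  assumes "smooth_on S f" "v \<in> Basis" "p \<in> S"
  shows "((\<lambda>s. f (p + s *\<^sub>R v)) has_real_derivative dirderiv v f p) (at 0)"
  using hd_smooth[OF assms] by (simp add: has_real_derivative_iff_has_vector_derivative)

lemma dd_eq: "((\<lambda>s. f (p + s *\<^sub>R v)) has_vector_derivative D) (at 0) \<Longrightarrow> dirderiv v f p = D"
  unfolding dirderiv_def by (rule vector_derivative_at)


definition HDR :: "'a::real_normed_vector \<Rightarrow> ('a \<Rightarrow> real) \<Rightarrow> 'a \<Rightarrow> real \<Rightarrow> bool" where
  "HDR v f p a \<longleftrightarrow> ((\<lambda>s. f (p + s *\<^sub>R v)) has_real_derivative a) (at 0)"

lemma HDR_mult: "HDR v f p a \<Longrightarrow> HDR v g p b \<Longrightarrow> HDR v (\<lambda>q. f q * g q) p (f p * b + a * g p)"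
  unfolding HDR_def by (auto intro!: derivative_eq_intros)

lemma HDR_cmult: "HDR v f p a \<Longrightarrow> HDR v (\<lambda>q. c * f q) p (c * a)"
  unfolding HDR_def by (auto intro!: derivative_eq_intros)

lemma HDR_diff: "HDR v f p a \<Longrightarrow> HDR v g p b \<Longrightarrow> HDR v (\<lambda>q. f q - g q) p (a - b)"
  unfolding HDR_def by (auto intro!: derivative_eq_intros)

lemma HDR_sq: "HDR v f p a \<Longrightarrow> HDR v (\<lambda>q. (f q)^2) p (2 * f p * a)"
  using HDR_mult[of v f p a f a] by (simp add: power2_eq_square algebra_simps)

lemma dz_real:
  fixes f :: "complex \<times> real \<Rightarrow> real"
  assumes "HDR (1,0) f p a" "HDR (\<i>,0) f p b"
  shows "d_z (\<lambda>q. of_real (f q)) p = (of_real a - \<i> * of_real b) / 2"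
proof -
  have "dirderiv (1,0) (\<lambda>q. of_real (f q)) p = (of_real a :: complex)"
    by (rule dd_eq, rule has_vector_derivative_of_real, rule assms(1)[unfolded HDR_def])
  moreover have "dirderiv (\<i>,0) (\<lambda>q. of_real (f q)) p = (of_real b :: complex)"
    by (rule dd_eq, rule has_vector_derivative_of_real, rule assms(2)[unfolded HDR_def])
  ultimately show ?thesis unfolding d_z_def by simp
qed

theorem theorem3:
  fixes U :: "complex set" and I :: "real set"
    and Psi1 Psi2 Phi1 Phi2 :: "complex \<times> real \<Rightarrow> complex"
    and x1 x2 x3 x4 :: "complex \<times> real \<Rightarrow> real"
  assumes U: "open U" and I: "open I" "is_interval I"
    and sm: "smooth_on (U \<times> I) Psi1" "smooth_on (U \<times> I) Psi2"
            "smooth_on (U \<times> I) Phi1" "smooth_on (U \<times> I) Phi2"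
            "smooth_on (U \<times> I) x1" "smooth_on (U \<times> I) x2"
            "smooth_on (U \<times> I) x3" "smooth_on (U \<times> I) x4"
    and W1: "\<And>p. p \<in> U \<times> I \<Longrightarrow> d_z (\<lambda>q. of_real (x1 q)) p
              = \<i>/2 * (cnj (Phi2 p) * cnj (Psi2 p) + Phi1 p * Psi1 p)"
    and W2: "\<And>p. p \<in> U \<times> I \<Longrightarrow> d_z (\<lambda>q. of_real (x2 q)) p
              = 1/2 * (cnj (Phi2 p) * cnj (Psi2 p) - Phi1 p * Psi1 p)"
    and W3: "\<And>p. p \<in> U \<times> I \<Longrightarrow> d_z (\<lambda>q. of_real (x3 q)) p
              = 1/2 * (cnj (Phi2 p) * Psi1 p + Phi1 p * cnj (Psi2 p))"
    and W4: "\<And>p. p \<in> U \<times> I \<Longrightarrow> d_z (\<lambda>q. of_real (x4 q)) p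
              = \<i>/2 * (cnj (Phi2 p) * Psi1 p - Phi1 p * cnj (Psi2 p))"
    and E1: "\<And>p. p \<in> U \<times> I \<Longrightarrow> d_tau Psi1 p
              = (of_real (x3 p) - \<i> * of_real (x4 p)) * Psi1 p
                - \<i> * (of_real (x1 p) - \<i> * of_real (x2 p)) * cnj (Psi2 p)"
    and E2: "\<And>p. p \<in> U \<times> I \<Longrightarrow> d_tau Psi2 p
              = (of_real (x3 p) - \<i> * of_real (x4 p)) * Psi2 p
                + \<i> * (of_real (x1 p) - \<i> * of_real (x2 p)) * cnj (Psi1 p)"
    and E3: "\<And>p. p \<in> U \<times> I \<Longrightarrow> d_tau Phi1 p
              = (of_real (x3 p) + \<i> * of_real (x4 p)) * Phi1 p
                - \<i> * (of_real (x1 p) - \<i> * of_real (x2 p)) * cnj (Phi2 p)"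
    and E4: "\<And>p. p \<in> U \<times> I \<Longrightarrow> d_tau Phi2 p
              = (of_real (x3 p) + \<i> * of_real (x4 p)) * Phi2 p
                + \<i> * (of_real (x1 p) - \<i> * of_real (x2 p)) * cnj (Phi1 p)"
  shows "\<forall>p \<in> U \<times> I.
           d_tau (d_z (\<lambda>q. of_real (x1 q))) p
             = d_z (\<lambda>q. of_real (V1 (x1 q) (x2 q) (x3 q) (x4 q))) p
         \<and> d_tau (d_z (\<lambda>q. of_real (x2 q))) p
             = d_z (\<lambda>q. of_real (V2 (x1 q) (x2 q) (x3 q) (x4 q))) p
         \<and> d_tau (d_z (\<lambda>q. of_real (x3 q))) p
             = d_z (\<lambda>q. of_real (V3 (x1 q) (x2 q) (x3 q) (x4 q))) p
         \<and> d_tau (d_z (\<lambda>q. of_real (x4 q))) p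
             = d_z (\<lambda>q. of_real (V4 (x1 q) (x2 q) (x3 q) (x4 q))) p"
proof (intro ballI)
  fix p assume p: "p \<in> U \<times> I"
  note B = basis_facts
  define S where "S = {s::real. p + s *\<^sub>R (0::complex,1::real) \<in> U \<times> I}"
  have Sopen: "open S" unfolding S_def
    by (rule continuous_open_vimage[unfolded vimage_def], intro open_Times U I, intro allI continuous_intros)
  have S0: "0 \<in> S" using p by (simp add: S_def flip: zero_prod_def)
  have SP: "\<And>s. s \<in> S \<Longrightarrow> p + s *\<^sub>R (0::complex,1::real) \<in> U \<times> I" by (simp add: S_def)
  have dPsi1: "((\<lambda>s. Psi1 (p + (0, s))) has_vector_derivative d_tau Psi1 p) (at 0)"
    using hd_smooth[OF sm(1) B(3) p] by (simp add: d_tau_def)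
  have dPsi2: "((\<lambda>s. Psi2 (p + (0, s))) has_vector_derivative d_tau Psi2 p) (at 0)"
    using hd_smooth[OF sm(2) B(3) p] by (simp add: d_tau_def)
  have dPhi1: "((\<lambda>s. Phi1 (p + (0, s))) has_vector_derivative d_tau Phi1 p) (at 0)"
    using hd_smooth[OF sm(3) B(3) p] by (simp add: d_tau_def)
  have dPhi2: "((\<lambda>s. Phi2 (p + (0, s))) has_vector_derivative d_tau Phi2 p) (at 0)"
    using hd_smooth[OF sm(4) B(3) p] by (simp add: d_tau_def)
  define a1 where "a1 = dirderiv (1,0) x1 p"
  define a2 where "a2 = dirderiv (1,0) x2 p"
  define a3 where "a3 = dirderiv (1,0) x3 p"
  define a4 where "a4 = dirderiv (1,0) x4 p"
  define b1 where "b1 = dirderiv (\<i>,0) x1 p"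
  define b2 where "b2 = dirderiv (\<i>,0) x2 p"
  define b3 where "b3 = dirderiv (\<i>,0) x3 p"
  define b4 where "b4 = dirderiv (\<i>,0) x4 p"
  have A1: "HDR (1,0) x1 p a1"
    unfolding a1_def HDR_def by (rule hd_smooth_real[OF sm(5) B(1) p])
  have A2: "HDR (1,0) x2 p a2"
    unfolding a2_def HDR_def by (rule hd_smooth_real[OF sm(6) B(1) p])
  have A3: "HDR (1,0) x3 p a3"
    unfolding a3_def HDR_def by (rule hd_smooth_real[OF sm(7) B(1) p])
  have A4: "HDR (1,0) x4 p a4"
    unfolding a4_def HDR_def by (rule hd_smooth_real[OF sm(8) B(1) p])
  have B1: "HDR (\<i>,0) x1 p b1"
    unfolding b1_def HDR_def by (rule hd_smooth_real[OF sm(5) B(2) p])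
  have B2: "HDR (\<i>,0) x2 p b2"
    unfolding b2_def HDR_def by (rule hd_smooth_real[OF sm(6) B(2) p])
  have B3: "HDR (\<i>,0) x3 p b3"
    unfolding b3_def HDR_def by (rule hd_smooth_real[OF sm(7) B(2) p])
  have B4: "HDR (\<i>,0) x4 p b4"
    unfolding b4_def HDR_def by (rule hd_smooth_real[OF sm(8) B(2) p])
  have Z1: "(of_real a1 - \<i> * of_real b1) / 2 = \<i>/2 * (cnj (Phi2 p) * cnj (Psi2 p) + Phi1 p * Psi1 p)"
    using dz_real[OF A1 B1] W1[OF p] by simp
  have Z2: "(of_real a2 - \<i> * of_real b2) / 2 = 1/2 * (cnj (Phi2 p) * cnj (Psi2 p) - Phi1 p * Psi1 p)"
    using dz_real[OF A2 B2] W2[OF p] by simp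
  have Z3: "(of_real a3 - \<i> * of_real b3) / 2 = 1/2 * (cnj (Phi2 p) * Psi1 p + Phi1 p * cnj (Psi2 p))"
    using dz_real[OF A3 B3] W3[OF p] by simp
  have Z4: "(of_real a4 - \<i> * of_real b4) / 2 = \<i>/2 * (cnj (Phi2 p) * Psi1 p - Phi1 p * cnj (Psi2 p))"
    using dz_real[OF A4 B4] W4[OF p] by simp
  have ii: "\<i> * \<i> = -1" by simp
  note R1 = dz_real[OF HDR_mult[OF HDR_cmult[OF A1] A3] HDR_mult[OF HDR_cmult[OF B1] B3]]
  have T1: "d_tau (d_z (\<lambda>q. of_real (x1 q))) p = (\<i>/2 * (cnj (Phi2 p) * cnj (d_tau Psi2 p) + cnj (d_tau Phi2 p) * cnj (Psi2 p) + (Phi1 p * d_tau Psi1 p + d_tau Phi1 p * Psi1 p)))"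
  proof -
    have "((\<lambda>s. d_z (\<lambda>q. of_real (x1 q)) (p + s *\<^sub>R (0,1))) has_vector_derivative (\<i>/2 * (cnj (Phi2 p) * cnj (d_tau Psi2 p) + cnj (d_tau Phi2 p) * cnj (Psi2 p) + (Phi1 p * d_tau Psi1 p + d_tau Phi1 p * Psi1 p)))) (at 0)"
    proof (rule has_vector_derivative_transform_within_open[OF _ Sopen S0])
      show "((\<lambda>s. (\<lambda>q. \<i>/2 * (cnj (Phi2 q) * cnj (Psi2 q) + Phi1 q * Psi1 q)) (p + s *\<^sub>R (0,1))) has_vector_derivative (\<i>/2 * (cnj (Phi2 p) * cnj (d_tau Psi2 p) + cnj (d_tau Phi2 p) * cnj (Psi2 p) + (Phi1 p * d_tau Psi1 p + d_tau Phi1 p * Psi1 p)))) (at 0)"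
        by (auto intro!: derivative_eq_intros dPsi1 dPsi2 dPhi1 dPhi2 simp: algebra_simps add_divide_distrib simp flip: zero_prod_def)
      show "\<And>y. y \<in> S \<Longrightarrow> (\<lambda>q. \<i>/2 * (cnj (Phi2 q) * cnj (Psi2 q) + Phi1 q * Psi1 q)) (p + y *\<^sub>R (0,1)) = d_z (\<lambda>q. of_real (x1 q)) (p + y *\<^sub>R (0,1))"
        using W1[OF SP] by simp
    qed
    then show ?thesis unfolding d_tau_def dirderiv_def by (rule vector_derivative_at)
  qed
  note R2 = dz_real[OF HDR_mult[OF HDR_cmult[OF A2] A3] HDR_mult[OF HDR_cmult[OF B2] B3]]
  have T2: "d_tau (d_z (\<lambda>q. of_real (x2 q))) p = (1/2 * (cnj (Phi2 p) * cnj (d_tau Psi2 p) + cnj (d_tau Phi2 p) * cnj (Psi2 p) - (Phi1 p * d_tau Psi1 p + d_tau Phi1 p * Psi1 p)))"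
  proof -
    have "((\<lambda>s. d_z (\<lambda>q. of_real (x2 q)) (p + s *\<^sub>R (0,1))) has_vector_derivative (1/2 * (cnj (Phi2 p) * cnj (d_tau Psi2 p) + cnj (d_tau Phi2 p) * cnj (Psi2 p) - (Phi1 p * d_tau Psi1 p + d_tau Phi1 p * Psi1 p)))) (at 0)"
    proof (rule has_vector_derivative_transform_within_open[OF _ Sopen S0])
      show "((\<lambda>s. (\<lambda>q. 1/2 * (cnj (Phi2 q) * cnj (Psi2 q) - Phi1 q * Psi1 q)) (p + s *\<^sub>R (0,1))) has_vector_derivative (1/2 * (cnj (Phi2 p) * cnj (d_tau Psi2 p) + cnj (d_tau Phi2 p) * cnj (Psi2 p) - (Phi1 p * d_tau Psi1 p + d_tau Phi1 p * Psi1 p)))) (at 0)"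
        by (auto intro!: derivative_eq_intros dPsi1 dPsi2 dPhi1 dPhi2 simp: algebra_simps add_divide_distrib simp flip: zero_prod_def)
      show "\<And>y. y \<in> S \<Longrightarrow> (\<lambda>q. 1/2 * (cnj (Phi2 q) * cnj (Psi2 q) - Phi1 q * Psi1 q)) (p + y *\<^sub>R (0,1)) = d_z (\<lambda>q. of_real (x2 q)) (p + y *\<^sub>R (0,1))"
        using W2[OF SP] by simp
    qed
    then show ?thesis unfolding d_tau_def dirderiv_def by (rule vector_derivative_at)
  qed
  note R3 = dz_real[OF HDR_diff[OF HDR_diff[OF HDR_diff[OF HDR_sq[OF A3] HDR_sq[OF A1]] HDR_sq[OF A2]] HDR_sq[OF A4]] HDR_diff[OF HDR_diff[OF HDR_diff[OF HDR_sq[OF B3] HDR_sq[OF B1]] HDR_sq[OF B2]] HDR_sq[OF B4]]]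
  have T3: "d_tau (d_z (\<lambda>q. of_real (x3 q))) p = (1/2 * (cnj (Phi2 p) * d_tau Psi1 p + cnj (d_tau Phi2 p) * Psi1 p + (Phi1 p * cnj (d_tau Psi2 p) + d_tau Phi1 p * cnj (Psi2 p))))"
  proof -
    have "((\<lambda>s. d_z (\<lambda>q. of_real (x3 q)) (p + s *\<^sub>R (0,1))) has_vector_derivative (1/2 * (cnj (Phi2 p) * d_tau Psi1 p + cnj (d_tau Phi2 p) * Psi1 p + (Phi1 p * cnj (d_tau Psi2 p) + d_tau Phi1 p * cnj (Psi2 p))))) (at 0)"
    proof (rule has_vector_derivative_transform_within_open[OF _ Sopen S0])
      show "((\<lambda>s. (\<lambda>q. 1/2 * (cnj (Phi2 q) * Psi1 q + Phi1 q * cnj (Psi2 q))) (p + s *\<^sub>R (0,1))) has_vector_derivative (1/2 * (cnj (Phi2 p) * d_tau Psi1 p + cnj (d_tau Phi2 p) * Psi1 p + (Phi1 p * cnj (d_tau Psi2 p) + d_tau Phi1 p * cnj (Psi2 p))))) (at 0)"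
        by (auto intro!: derivative_eq_intros dPsi1 dPsi2 dPhi1 dPhi2 simp: algebra_simps add_divide_distrib simp flip: zero_prod_def)
      show "\<And>y. y \<in> S \<Longrightarrow> (\<lambda>q. 1/2 * (cnj (Phi2 q) * Psi1 q + Phi1 q * cnj (Psi2 q))) (p + y *\<^sub>R (0,1)) = d_z (\<lambda>q. of_real (x3 q)) (p + y *\<^sub>R (0,1))"
        using W3[OF SP] by simp
    qed
    then show ?thesis unfolding d_tau_def dirderiv_def by (rule vector_derivative_at)
  qed
  note R4 = dz_real[OF HDR_mult[OF HDR_cmult[OF A4] A3] HDR_mult[OF HDR_cmult[OF B4] B3]]
  have T4: "d_tau (d_z (\<lambda>q. of_real (x4 q))) p = (\<i>/2 * (cnj (Phi2 p) * d_tau Psi1 p + cnj (d_tau Phi2 p) * Psi1 p - (Phi1 p * cnj (d_tau Psi2 p) + d_tau Phi1 p * cnj (Psi2 p))))"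
  proof -
    have "((\<lambda>s. d_z (\<lambda>q. of_real (x4 q)) (p + s *\<^sub>R (0,1))) has_vector_derivative (\<i>/2 * (cnj (Phi2 p) * d_tau Psi1 p + cnj (d_tau Phi2 p) * Psi1 p - (Phi1 p * cnj (d_tau Psi2 p) + d_tau Phi1 p * cnj (Psi2 p))))) (at 0)"
    proof (rule has_vector_derivative_transform_within_open[OF _ Sopen S0])
      show "((\<lambda>s. (\<lambda>q. \<i>/2 * (cnj (Phi2 q) * Psi1 q - Phi1 q * cnj (Psi2 q))) (p + s *\<^sub>R (0,1))) has_vector_derivative (\<i>/2 * (cnj (Phi2 p) * d_tau Psi1 p + cnj (d_tau Phi2 p) * Psi1 p - (Phi1 p * cnj (d_tau Psi2 p) + d_tau Phi1 p * cnj (Psi2 p))))) (at 0)"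
        by (auto intro!: derivative_eq_intros dPsi1 dPsi2 dPhi1 dPhi2 simp: algebra_simps add_divide_distrib simp flip: zero_prod_def)
      show "\<And>y. y \<in> S \<Longrightarrow> (\<lambda>q. \<i>/2 * (cnj (Phi2 q) * Psi1 q - Phi1 q * cnj (Psi2 q))) (p + y *\<^sub>R (0,1)) = d_z (\<lambda>q. of_real (x4 q)) (p + y *\<^sub>R (0,1))"
        using W4[OF SP] by simp
    qed
    then show ?thesis unfolding d_tau_def dirderiv_def by (rule vector_derivative_at)
  qed
  have G1: "\<i>/2 * (cnj (Phi2 p) * cnj (d_tau Psi2 p) + cnj (d_tau Phi2 p) * cnj (Psi2 p) + (Phi1 p * d_tau Psi1 p + d_tau Phi1 p * Psi1 p)) = 2 * of_real (x1 p) * (1/2 * (cnj (Phi2 p) * Psi1 p + Phi1 p * cnj (Psi2 p))) + 2 * of_real (x3 p) * (\<i>/2 * (cnj (Phi2 p) * cnj (Psi2 p) + Phi1 p * Psi1 p))"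
    unfolding E1[OF p] E2[OF p] E3[OF p] E4[OF p]
    by (simp add: algebra_simps)
  have H1: "2 * of_real (x1 p) * ((of_real a3 - \<i> * of_real b3)/2) + 2 * of_real (x3 p) * ((of_real a1 - \<i> * of_real b1)/2) = 2 * of_real (x1 p) * (1/2 * (cnj (Phi2 p) * Psi1 p + Phi1 p * cnj (Psi2 p))) + 2 * of_real (x3 p) * (\<i>/2 * (cnj (Phi2 p) * cnj (Psi2 p) + Phi1 p * Psi1 p))"
    unfolding Z1 Z2 Z3 Z4 ..
  have K1: "d_tau (d_z (\<lambda>q. of_real (x1 q))) p = d_z (\<lambda>q. of_real (V1 (x1 q) (x2 q) (x3 q) (x4 q))) p"
    unfolding T1 G1 H1[symmetric] V1_def R1 by (simp add: field_simps)
  have G2: "1/2 * (cnj (Phi2 p) * cnj (d_tau Psi2 p) + cnj (d_tau Phi2 p) * cnj (Psi2 p) - (Phi1 p * d_tau Psi1 p + d_tau Phi1 p * Psi1 p)) = 2 * of_real (x2 p) * (1/2 * (cnj (Phi2 p) * Psi1 p + Phi1 p * cnj (Psi2 p))) + 2 * of_real (x3 p) * (1/2 * (cnj (Phi2 p) * cnj (Psi2 p) - Phi1 p * Psi1 p))"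
    unfolding E1[OF p] E2[OF p] E3[OF p] E4[OF p]
    by (simp add: algebra_simps)
  have H2: "2 * of_real (x2 p) * ((of_real a3 - \<i> * of_real b3)/2) + 2 * of_real (x3 p) * ((of_real a2 - \<i> * of_real b2)/2) = 2 * of_real (x2 p) * (1/2 * (cnj (Phi2 p) * Psi1 p + Phi1 p * cnj (Psi2 p))) + 2 * of_real (x3 p) * (1/2 * (cnj (Phi2 p) * cnj (Psi2 p) - Phi1 p * Psi1 p))"
    unfolding Z1 Z2 Z3 Z4 ..
  have K2: "d_tau (d_z (\<lambda>q. of_real (x2 q))) p = d_z (\<lambda>q. of_real (V2 (x1 q) (x2 q) (x3 q) (x4 q))) p"
    unfolding T2 G2 H2[symmetric] V2_def R2 by (simp add: field_simps)
  have G3: "1/2 * (cnj (Phi2 p) * d_tau Psi1 p + cnj (d_tau Phi2 p) * Psi1 p + (Phi1 p * cnj (d_tau Psi2 p) + d_tau Phi1 p * cnj (Psi2 p))) = 2 * of_real (x3 p) * (1/2 * (cnj (Phi2 p) * Psi1 p + Phi1 p * cnj (Psi2 p))) - 2 * of_real (x1 p) * (\<i>/2 * (cnj (Phi2 p) * cnj (Psi2 p) + Phi1 p * Psi1 p)) - 2 * of_real (x2 p) * (1/2 * (cnj (Phi2 p) * cnj (Psi2 p) - Phi1 p * Psi1 p)) - 2 * of_real (x4 p) * (\<i>/2 * (cnj (Phi2 p) * Psi1 p - Phi1 p * cnj (Psi2 p)))"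
    unfolding E1[OF p] E2[OF p] E3[OF p] E4[OF p]
    by (simp add: algebra_simps)
  have H3: "2 * of_real (x3 p) * ((of_real a3 - \<i> * of_real b3)/2) - 2 * of_real (x1 p) * ((of_real a1 - \<i> * of_real b1)/2) - 2 * of_real (x2 p) * ((of_real a2 - \<i> * of_real b2)/2) - 2 * of_real (x4 p) * ((of_real a4 - \<i> * of_real b4)/2) = 2 * of_real (x3 p) * (1/2 * (cnj (Phi2 p) * Psi1 p + Phi1 p * cnj (Psi2 p))) - 2 * of_real (x1 p) * (\<i>/2 * (cnj (Phi2 p) * cnj (Psi2 p) + Phi1 p * Psi1 p)) - 2 * of_real (x2 p) * (1/2 * (cnj (Phi2 p) * cnj (Psi2 p) - Phi1 p * Psi1 p)) - 2 * of_real (x4 p) * (\<i>/2 * (cnj (Phi2 p) * Psi1 p - Phi1 p * cnj (Psi2 p)))"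
    unfolding Z1 Z2 Z3 Z4 ..
  have K3: "d_tau (d_z (\<lambda>q. of_real (x3 q))) p = d_z (\<lambda>q. of_real (V3 (x1 q) (x2 q) (x3 q) (x4 q))) p"
    unfolding T3 G3 H3[symmetric] V3_def R3 by (simp add: field_simps)
  have G4: "\<i>/2 * (cnj (Phi2 p) * d_tau Psi1 p + cnj (d_tau Phi2 p) * Psi1 p - (Phi1 p * cnj (d_tau Psi2 p) + d_tau Phi1 p * cnj (Psi2 p))) = 2 * of_real (x4 p) * (1/2 * (cnj (Phi2 p) * Psi1 p + Phi1 p * cnj (Psi2 p))) + 2 * of_real (x3 p) * (\<i>/2 * (cnj (Phi2 p) * Psi1 p - Phi1 p * cnj (Psi2 p)))"
    unfolding E1[OF p] E2[OF p] E3[OF p] E4[OF p]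
    by (simp add: algebra_simps)
  have H4: "2 * of_real (x4 p) * ((of_real a3 - \<i> * of_real b3)/2) + 2 * of_real (x3 p) * ((of_real a4 - \<i> * of_real b4)/2) = 2 * of_real (x4 p) * (1/2 * (cnj (Phi2 p) * Psi1 p + Phi1 p * cnj (Psi2 p))) + 2 * of_real (x3 p) * (\<i>/2 * (cnj (Phi2 p) * Psi1 p - Phi1 p * cnj (Psi2 p)))"
    unfolding Z1 Z2 Z3 Z4 ..
  have K4: "d_tau (d_z (\<lambda>q. of_real (x4 q))) p = d_z (\<lambda>q. of_real (V4 (x1 q) (x2 q) (x3 q) (x4 q))) p"
    unfolding T4 G4 H4[symmetric] V4_def R4 by (simp add: field_simps)
  show "           d_tau (d_z (\<lambda>q. of_real (x1 q))) p
             = d_z (\<lambda>q. of_real (V1 (x1 q) (x2 q) (x3 q) (x4 q))) p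
         \<and> d_tau (d_z (\<lambda>q. of_real (x2 q))) p
             = d_z (\<lambda>q. of_real (V2 (x1 q) (x2 q) (x3 q) (x4 q))) p
         \<and> d_tau (d_z (\<lambda>q. of_real (x3 q))) p
             = d_z (\<lambda>q. of_real (V3 (x1 q) (x2 q) (x3 q) (x4 q))) p
         \<and> d_tau (d_z (\<lambda>q. of_real (x4 q))) p
             = d_z (\<lambda>q. of_real (V4 (x1 q) (x2 q) (x3 q) (x4 q))) p"
    using K1 K2 K3 K4 by blast
qed

end
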